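(* For any real symmetric $n\times n$ matrix $M$, there exists a basis $\{f_1,\dots,f_n\}$ of $\mathbb R^n$ consisting of eigenfunctions of $M$ each of which has minimal support.
   Context: An eigenfunction is a nonzero eigenvector of $M$. For $f\in\mathbb R^n$, $\mathrm{supp}(f)=\{i\in\{1,\dots,n\}: f(i)\ne0\}$. An eigenfunction $f$ has minimal support if every eigenfunction $g$ for the same eigenvalue as $f$ with $\mathrm{supp}(g)\subseteq\mathrm{supp}(f)$ satisfies $\mathrm{supp}(g)=\mathrm{supp}(f)$. *)

theory Defs
  imports "HOL-Analysis.Analysis"
begin

definition supp_vec :: "real^'n \<Rightarrow> 'n set" where
  "supp_vec f = {i. f $ i \<noteq> 0}"

definition eigenfunction_for :: "real^'n^'n \<Rightarrow> real \<Rightarrow> real^'n \<Rightarrow> bool" where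
  "eigenfunction_for M lam f \<longleftrightarrow> f \<noteq> 0 \<and> M *v f = lam *\<^sub>R f"

definition eigenfunction :: "real^'n^'n \<Rightarrow> real^'n \<Rightarrow> bool" where
  "eigenfunction M f \<longleftrightarrow> (\<exists>lam. eigenfunction_for M lam f)"

definition minimal_support :: "real^'n^'n \<Rightarrow> real^'n \<Rightarrow> bool" where
  "minimal_support M f \<longleftrightarrow> (\<exists>lam. eigenfunction_for M lam f \<and>
     (\<forall>g. eigenfunction_for M lam g \<and> supp_vec g \<subseteq> supp_vec f \<longrightarrow> supp_vec g = supp_vec f))"

end

theory Submission imports Defs begin

lemma sym_inner:
  fixes A :: "real^'n^'n"
  assumes "transpose A = A"
  shows "x \<bullet> (A *v y) = (A *v x) \<bullet> y"
  by (metis assms dot_lmul_matrix vector_transpose_matrix)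

lemma eigvec_in_subspace:
  fixes A :: "real^'n^'n"
  assumes symA: "transpose A = A" and W: "subspace W" and inv: "\<And>x. x \<in> W \<Longrightarrow> A *v x \<in> W"
    and ne: "W \<noteq> {0}"
  shows "\<exists>x\<in>W. x \<noteq> 0 \<and> (\<exists>l. A *v x = l *\<^sub>R x)"
proof -
  let ?S = "W \<inter> sphere 0 1"
  have cS: "compact ?S"
    using closed_Int_compact[OF closed_subspace[OF W] compact_sphere] by simp
  obtain w where w: "w \<in> W" "w \<noteq> 0" using ne subspace_0[OF W] by blast
  have "w /\<^sub>R norm w \<in> ?S" using w W by (simp add: subspace_scale)
  then have neS: "?S \<noteq> {}" by blast
  have cont: "continuous_on ?S (\<lambda>x. x \<bullet> (A *v x))"
    by (intro continuous_intros linear_continuous_on[OF matrix_vector_mul_bounded_linear])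
  obtain x0 where x0: "x0 \<in> ?S" and mx: "\<And>y. y \<in> ?S \<Longrightarrow> y \<bullet> (A *v y) \<le> x0 \<bullet> (A *v x0)"
    using continuous_attains_sup[OF cS neS cont] by blast
  define l where "l = x0 \<bullet> (A *v x0)"
  define q where "q y = l * (y \<bullet> y) - y \<bullet> (A *v y)" for y
  have qpos: "q y \<ge> 0" if "y \<in> W" for y
  proof (cases "y = 0")
    case True then show ?thesis by (simp add: q_def)
  next
    case False
    let ?u = "y /\<^sub>R norm y"
    have "?u \<in> ?S" using that False W by (simp add: subspace_scale)
    then have "?u \<bullet> (A *v ?u) \<le> l" using mx l_def by blast
    then have "(y \<bullet> (A *v y)) / (norm y)^2 \<le> l"
      by (simp add: matrix_vector_mult_scaleR power2_eq_square divide_inverse mult.commute mult.left_commute)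
    then have "y \<bullet> (A *v y) \<le> l * (norm y)^2" using False
      by (simp add: divide_le_eq mult.commute)
    then show ?thesis by (simp add: q_def power2_norm_eq_inner)
  qed
  have nx0: "x0 \<bullet> x0 = 1" using x0 by (simp add: norm_eq_1)
  have q0: "q x0 = 0" by (simp add: q_def nx0 l_def)
  define z where "z = l *\<^sub>R x0 - A *v x0"
  have zW: "z \<in> W" unfolding z_def using x0 inv W by (simp add: subspace_diff subspace_scale)
  have expand: "q (x0 + t *\<^sub>R z) = q x0 + 2 * t * (z \<bullet> z) + t^2 * q z" for t
  proof -
    have s: "x0 \<bullet> (A *v z) = z \<bullet> (A *v x0)" using sym_inner[OF symA] by (simp add: inner_commute)
    show ?thesis
      unfolding q_def
      apply (simp add: matrix_vector_right_distrib matrix_vector_mult_scaleR inner_add_left inner_add_right power2_eq_square algebra_simps s)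
      apply (simp add: z_def inner_diff_left inner_diff_right algebra_simps inner_commute)
      done
  qed
  have "z = 0"
  proof (rule ccontr)
    assume zn: "z \<noteq> 0"
    then have zz: "z \<bullet> z > 0" by simp
    have qz: "q z \<ge> 0" using qpos zW by blast
    have "x0 + (-1) *\<^sub>R z \<in> W" using x0 zW W by (simp add: subspace_diff)
    then have h1: "q (x0 + (-1) *\<^sub>R z) \<ge> 0" using qpos by blast
    show False
    proof (cases "q z = 0")
      case True
      then show False using h1 expand[of "-1"] q0 zz by simp
    next
      case False
      then have qzp: "q z > 0" using qz by simp
      define t where "t = - (z \<bullet> z) / q z"
      have "x0 + t *\<^sub>R z \<in> W" using x0 zW W by (simp add: subspace_add subspace_scale)
      then have h: "q (x0 + t *\<^sub>R z) \<ge> 0" using qpos by blast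
      have "2 * t * (z \<bullet> z) + t^2 * q z = - ((z \<bullet> z)^2) / q z"
        using qzp by (simp add: t_def power2_eq_square field_simps)
      moreover have "- ((z \<bullet> z)^2) / q z < 0" using zz qzp by simp
      ultimately show False using h expand[of t] q0 by simp
    qed
  qed
  then have "A *v x0 = l *\<^sub>R x0" by (simp add: z_def)
  moreover have "x0 \<noteq> 0" using x0 by auto
  ultimately show ?thesis using x0 by blast
qed

lemma eig_in_span_minimal:
  fixes M :: "real^'n^'n"
  shows "M *v v = l *\<^sub>R v \<Longrightarrow> v \<in> span {f. minimal_support M f}"
proof (induction "card (supp_vec v)" arbitrary: v rule: less_induct)
  case less
  let ?S = "{f. minimal_support M f}"
  show ?case
  proof (cases "v = 0")
    case True then show ?thesis by (simp add: span_zero)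
  next
    case False
    then have ev: "eigenfunction_for M l v" using less.prems by (simp add: eigenfunction_for_def)
    show ?thesis
    proof (cases "minimal_support M v")
      case True then show ?thesis by (simp add: span_base)
    next
      case nm: False
      then obtain g where g: "eigenfunction_for M l g" "supp_vec g \<subseteq> supp_vec v" "supp_vec g \<noteq> supp_vec v"
        using ev unfolding minimal_support_def by blast
      have cg: "card (supp_vec g) < card (supp_vec v)"
        using g by (simp add: psubset_card_mono)
      have gS: "g \<in> span ?S"
        using less.hyps[OF cg] g(1) by (simp add: eigenfunction_for_def)
      obtain i where i: "g $ i \<noteq> 0"
        using g(1) unfolding eigenfunction_for_def by (metis vec_eq_iff zero_index)
      define c where "c = v $ i / g $ i"
      define v' where "v' = v - c *\<^sub>R g"
      have ev': "M *v v' = l *\<^sub>R v'"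
        using less.prems g(1) unfolding v'_def eigenfunction_for_def
        by (simp add: matrix_vector_mult_diff_distrib matrix_vector_mult_scaleR scaleR_diff_right)
      have "supp_vec v' \<subseteq> supp_vec v - {i}"
      proof
        fix j assume j: "j \<in> supp_vec v'"
        have "v' $ i = 0" using i by (simp add: v'_def c_def)
        then have "j \<noteq> i" using j by (auto simp: supp_vec_def)
        moreover have "j \<in> supp_vec v"
        proof (rule ccontr)
          assume "j \<notin> supp_vec v"
          then have "v $ j = 0" "g $ j = 0" using g(2) by (auto simp: supp_vec_def)
          then show False using j by (simp add: supp_vec_def v'_def)
        qed
        ultimately show "j \<in> supp_vec v - {i}" by blast
      qed
      moreover have "i \<in> supp_vec v" using i g(2) by (auto simp: supp_vec_def)
      ultimately have "supp_vec v' \<subset> supp_vec v" by blast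
      then have "card (supp_vec v') < card (supp_vec v)"
        by (simp add: psubset_card_mono)
      then have "v' \<in> span ?S" using less.hyps ev' by blast
      then have "v' + c *\<^sub>R g \<in> span ?S" using gS by (simp add: span_add span_scale)
      then show ?thesis by (simp add: v'_def)
    qed
  qed
qed

lemma eig_span_UNIV:
  fixes M :: "real^'n^'n"
  assumes symA: "transpose M = M"
  shows "span {v. \<exists>l. M *v v = l *\<^sub>R v} = UNIV"
proof -
  let ?E = "{v. \<exists>l. M *v v = l *\<^sub>R v}"
  define W where "W = {w. \<forall>e\<in>?E. w \<bullet> e = 0}"
  have sW: "subspace W" unfolding W_def subspace_def
    by (simp add: inner_add_left)
  have inv: "M *v x \<in> W" if "x \<in> W" for x
  proof -
    have "(M *v x) \<bullet> e = 0" if eE: "e \<in> ?E" for e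
    proof -
      obtain l where "M *v e = l *\<^sub>R e" using eE by blast
      then have "(M *v x) \<bullet> e = l * (x \<bullet> e)" using sym_inner[OF symA, of x e] by simp
      then show ?thesis using \<open>x \<in> W\<close> eE by (simp add: W_def)
    qed
    then show ?thesis by (simp add: W_def)
  qed
  have W0: "W = {0}"
  proof (rule ccontr)
    assume "W \<noteq> {0}"
    then obtain x where x: "x \<in> W" "x \<noteq> 0" "\<exists>l. M *v x = l *\<^sub>R x"
      using eigvec_in_subspace[OF symA sW inv] by blast
    then have "x \<bullet> x = 0" by (simp add: W_def)
    then show False using x by simp
  qed
  show ?thesis
  proof (rule set_eqI, simp)
    fix x :: "real^'n"
    obtain y z where yz: "y \<in> span ?E" "\<And>w. w \<in> span ?E \<Longrightarrow> orthogonal z w" "x = y + z"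
      using orthogonal_subspace_decomp_exists[of ?E x] by blast
    have "z \<bullet> e = 0" if "e \<in> ?E" for e
      using yz(2)[OF span_base[OF that]] by (simp add: orthogonal_def)
    then have "z \<in> W" unfolding W_def by blast
    then have "z = 0" using W0 by blast
    then show "x \<in> span ?E" using yz by simp
  qed
qed

theorem lemma2p2:
  fixes M :: "real^'n^'n"
  assumes "transpose M = M"
  shows "\<exists>B :: (real^'n) set. independent B \<and> span B = UNIV \<and>
           (\<forall>f\<in>B. eigenfunction M f \<and> minimal_support M f)"
proof -
  let ?S = "{f. minimal_support M f}"
  have "{v. \<exists>l. M *v v = l *\<^sub>R v} \<subseteq> span ?S" using eig_in_span_minimal by blast
  then have spS: "span ?S = UNIV"
    using eig_span_UNIV[OF assms] span_minimal[OF _ subspace_span] by blast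
  obtain B where B: "B \<subseteq> ?S" "independent B" "?S \<subseteq> span B"
    using maximal_independent_subset by blast
  have "span ?S \<subseteq> span B" using B(3) span_minimal[OF _ subspace_span] by blast
  then have "span B = UNIV" using spS by blast
  moreover have "\<forall>f\<in>B. eigenfunction M f \<and> minimal_support M f"
    using B(1) unfolding eigenfunction_def minimal_support_def by blast
  ultimately show ?thesis using B(2) by blast
qed

end
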